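(* Let $\mathcal{S}$ be a discrete state space and let $\{\mathcal{X}(t)\}_{t\in\mathbb{N}_0}$ be a discrete-time homogeneous Markov chain on $\mathcal{S}$ with transition matrix $A$ having no absorbing states, i.e. $A_{ii}<1$ for all $i$. Write $p_i=1-A_{ii}\in(0,1]$, $q_i=1-p_i$, and $H_{ij}=0$ if $j=i$, $H_{ij}=A_{ij}/(1-A_{ii})$ if $j\ne i$. Then $\mathcal{X}$ can be written as $\mathcal{X}(t)=X_n$ for $V_n\le t<V_{n+1}$, where $\{X_n\}$ is a Markov chain with transition matrix $H$, $V_0=0$, $V_n=\sum_{k=0}^{n-1}M_k$, and $P(M_k=r\mid X_k=i)=p_iq_i^{r-1}$, $r\in\mathbb{N}$. Let $Z,Z_1,Z_2,\dots$ be i.i.d. positive-integer-valued random variables, independent of $\mathcal{X}$, let $\sigma_d(0)=0$, $\sigma_d(n)=\sum_{j=1}^nZ_j$, and $L_d(t)=\max\{n\in\mathbb{N}_0:\sigma_d(n)\le t\}$, $t\in\mathbb{N}_0$. Then the time-changed process $\mathcal{Y}(t)=\mathcal{X}(L_d(t))$, $t\in\mathbb{N}_0$, is a semi-Markov chain of type A: that is, $\mathcal{Y}(t)=X_n$ for $T_n\le t<T_{n+1}$, where $\{X_n\}$ is the Markov chain with transition matrix $H$, $T_0=0$, $T_n=\sum_{k=0}^{n-1}J_k$, and the waiting times have the compound geometric form $J_k\overset{d}{=}\sum_{i=1}^{M_k}Z_i$, so that $\mathbb{E}(u^{J_k}\mid X_k=i)=\dfrac{p_i\,\mathbb{E}u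^Z}{1-q_i\,\mathbb{E}u^Z}$.
   Context: $\mathbb{N}_0=\mathbb{N}\cup\{0\}$. In the semi-Markov chain the conditional law of the waiting time $J_k$ given $X_k=i$ depends only on $i$ (not on $k$); here it is the law of $\sum_{i=1}^{M}Z_i$ with $M$ geometric, $P(M=r)=p_iq_i^{r-1}$, independent of the $Z$'s. *)

theory Defs
  imports "HOL-Probability.Probability"
begin

definition dtmc :: "'m measure \<Rightarrow> (nat \<Rightarrow> 'm \<Rightarrow> 'a) \<Rightarrow> ('a \<Rightarrow> 'a \<Rightarrow> real) \<Rightarrow> bool" where
  "dtmc M X A \<longleftrightarrow>
     (\<forall>t. X t \<in> measurable M (count_space UNIV)) \<and>
     (\<forall>n s. measure M {\<omega> \<in> space M. \<forall>k\<le>n. X k \<omega> = s k}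
            = measure M {\<omega> \<in> space M. X 0 \<omega> = s 0} * (\<Prod>k<n. A (s k) (s (Suc k))))"

definition jump_matrix :: "('a \<Rightarrow> 'a \<Rightarrow> real) \<Rightarrow> 'a \<Rightarrow> 'a \<Rightarrow> real" where
  "jump_matrix A i j = (if j = i then 0 else A i j / (1 - A i i))"

text \<open>The path y visits states s 0, ..., s n with sojourn times r 0, ..., r n:
with T_k = r 0 + ... + r (k-1), y t = s k for T_k \<le> t < T_(k+1), and y jumps
(changes state) at T_(k+1).\<close>
definition sojourn_path :: "(nat \<Rightarrow> 'a) \<Rightarrow> (nat \<Rightarrow> 'a) \<Rightarrow> (nat \<Rightarrow> nat) \<Rightarrow> nat \<Rightarrow> bool" where
  "sojourn_path y s r n \<longleftrightarrow>
     (\<forall>k\<le>n. (\<forall>t. (\<Sum>j<k. r j) \<le> t \<and> t < (\<Sum>j<Suc k. r j) \<longrightarrow> y t = s k)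
             \<and> y (\<Sum>j<Suc k. r j) \<noteq> s k)"

text \<open>Semi-Markov chain of type A with embedded chain transition matrix H and
sojourn-time law F i (depending only on the current state i): the joint law of
(X_0, J_0, ..., X_n, J_n) is  P(X_0 = s_0) * prod H(s_k, s_(k+1)) * prod F(s_k)(r_k).\<close>
definition semi_markov_typeA ::
  "'m measure \<Rightarrow> (nat \<Rightarrow> 'm \<Rightarrow> 'a) \<Rightarrow> ('a \<Rightarrow> 'a \<Rightarrow> real) \<Rightarrow> ('a \<Rightarrow> nat \<Rightarrow> real) \<Rightarrow> bool" where
  "semi_markov_typeA M Y H F \<longleftrightarrow>
     (\<forall>t. Y t \<in> measurable M (count_space UNIV)) \<and>
     (\<forall>n s r. (\<forall>k\<le>n. 1 \<le> r k) \<longrightarrow>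
        measure M {\<omega> \<in> space M. sojourn_path (\<lambda>t. Y t \<omega>) s r n}
        = measure M {\<omega> \<in> space M. Y 0 \<omega> = s 0}
          * (\<Prod>k<n. H (s k) (s (Suc k))) * (\<Prod>k\<le>n. F (s k) (r k)))"

definition geom_law :: "real \<Rightarrow> nat \<Rightarrow> real" where
  "geom_law p r = (if 1 \<le> r then p * (1 - p) ^ (r - 1) else 0)"

text \<open>Law of Z_1 + ... + Z_M with M geometric(p) independent of the Z's
(here Z_(j+1) is represented by Z j).\<close>
definition compound_geom_law :: "'m measure \<Rightarrow> (nat \<Rightarrow> 'm \<Rightarrow> nat) \<Rightarrow> real \<Rightarrow> nat \<Rightarrow> real" where
  "compound_geom_law M Z p r =
     (\<Sum>m. geom_law p (Suc m) * measure M {\<omega> \<in> space M. (\<Sum>j<Suc m. Z j \<omega>) = r})"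

definition renewal_count :: "(nat \<Rightarrow> nat) \<Rightarrow> nat \<Rightarrow> nat" where
  "renewal_count \<sigma> t = Max {n. \<sigma> n \<le> t}"

end

theory Submission
  imports Defs
begin

lemma ps_mono: "(a::nat) \<le> b \<Longrightarrow> (\<Sum>j<a. r j) \<le> (\<Sum>j<b. (r j::nat))"
  using sum_mono2[of "{..<b}" "{..<a}" r] by auto

lemma blk_exists: "t < (\<Sum>j<Suc n. r j) \<Longrightarrow> \<exists>k\<le>n. (\<Sum>j<k. r j) \<le> t \<and> t < (\<Sum>j<Suc k. (r j::nat))"
proof (induction n)
  case 0 then show ?case by auto
next
  case (Suc n)
  show ?case
  proof (cases "t < (\<Sum>j<Suc n. r j)")
    case True then show ?thesis using Suc.IH by (meson le_SucI)
  next
    case False then show ?thesis using Suc.prems by (intro exI[of _ "Suc n"]) auto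
  qed
qed

definition wpath :: "(nat \<Rightarrow> 'a) \<Rightarrow> (nat \<Rightarrow> nat) \<Rightarrow> nat \<Rightarrow> nat \<Rightarrow> 'a" where
  "wpath s r n t = s (card {k. k < n \<and> (\<Sum>j<Suc k. r j) \<le> t})"

lemma wpath_eq:
  assumes "k \<le> n" "(\<Sum>j<k. r j) \<le> t" "t < (\<Sum>j<Suc k. r j)"
  shows "wpath s r n t = s k"
proof -
  have "{k'. k' < n \<and> (\<Sum>j<Suc k'. r j) \<le> t} = {..<k}"
  proof (intro set_eqI iffI)
    fix x assume "x \<in> {k'. k' < n \<and> (\<Sum>j<Suc k'. r j) \<le> t}"
    then have "x < n" "(\<Sum>j<Suc x. r j) \<le> t" by auto
    show "x \<in> {..<k}"
    proof (rule ccontr)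
      assume "x \<notin> {..<k}"
      then have "Suc k \<le> Suc x" by simp
      from ps_mono[OF this, of r] assms(3) \<open>(\<Sum>j<Suc x. r j) \<le> t\<close> show False by linarith
    qed
  next
    fix x assume "x \<in> {..<k}"
    then have "Suc x \<le> k" by simp
    from ps_mono[OF this, of r] assms(2) \<open>x \<in> {..<k}\<close> assms(1)
    show "x \<in> {k'. k' < n \<and> (\<Sum>j<Suc k'. r j) \<le> t}" by auto
  qed
  then show ?thesis unfolding wpath_def by simp
qed

lemma sojourn_iff_w:
  assumes r: "\<forall>k\<le>n. 1 \<le> r k" and s: "\<forall>k<n. s (Suc k) \<noteq> s k"
  shows "sojourn_path y s r n \<longleftrightarrow>
    (\<forall>t<(\<Sum>j<Suc n. r j). y t = wpath s r n t) \<and> y (\<Sum>j<Suc n. r j) \<noteq> s n"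
proof
  assume sp: "sojourn_path y s r n"
  show "(\<forall>t<(\<Sum>j<Suc n. r j). y t = wpath s r n t) \<and> y (\<Sum>j<Suc n. r j) \<noteq> s n"
  proof safe
    fix t assume "t < (\<Sum>j<Suc n. r j)"
    from blk_exists[OF this] obtain k where k: "k \<le> n" "(\<Sum>j<k. r j) \<le> t" "t < (\<Sum>j<Suc k. r j)" by blast
    then show "y t = wpath s r n t" using sp wpath_eq[OF k, of s] unfolding sojourn_path_def by auto
  next
    assume "y (\<Sum>j<Suc n. r j) = s n"
    then show False using sp unfolding sojourn_path_def by auto
  qed
next
  assume h: "(\<forall>t<(\<Sum>j<Suc n. r j). y t = wpath s r n t) \<and> y (\<Sum>j<Suc n. r j) \<noteq> s n"
  show "sojourn_path y s r n" unfolding sojourn_path_def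
  proof (intro allI impI conjI)
    fix k t assume k: "k \<le> n" and t: "(\<Sum>j<k. r j) \<le> t \<and> t < (\<Sum>j<Suc k. r j)"
    have "t < (\<Sum>j<Suc n. r j)" using t ps_mono[of "Suc k" "Suc n" r] k by linarith
    then show "y t = s k" using h wpath_eq[of k n r t s] k t by auto
  next
    fix k assume k: "k \<le> n"
    show "y (\<Sum>j<Suc k. r j) \<noteq> s k"
    proof (cases "k = n")
      case True then show ?thesis using h by simp
    next
      case False
      then have kn: "Suc k \<le> n" using k by simp
      have rk1: "1 \<le> r (Suc k)" using r kn by simp
      then have "(\<Sum>j<Suc k. r j) < (\<Sum>j<Suc (Suc k). r j)" by simp
      also have "\<dots> \<le> (\<Sum>j<Suc n. r j)" using ps_mono[of "Suc (Suc k)" "Suc n" r] kn by simp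
      finally have "y (\<Sum>j<Suc k. r j) = wpath s r n (\<Sum>j<Suc k. r j)" using h by simp
      also have "\<dots> = s (Suc k)" using wpath_eq[of "Suc k" n r "\<Sum>j<Suc k. r j" s] kn rk1 by simp
      finally show ?thesis using s kn by simp
    qed
  qed
qed

lemma prod_split3: "(\<Prod>t<b + 1 + c. f t) = (\<Prod>t<b. f t) * f b * (\<Prod>i<c. f (b + 1 + i))"
  for f :: "nat \<Rightarrow> 'b::comm_monoid_mult"
  by (induction c) (simp_all add: ac_simps)

lemma prod_w:
  assumes r: "\<forall>k\<le>n. 1 \<le> r k" and mn: "m \<le> n"
  shows "(\<Prod>t<(\<Sum>j<Suc m. r j) - 1. A (wpath s r n t) (wpath s r n (Suc t)))
         = (\<Prod>k<m. A (s k) (s (Suc k))) * (\<Prod>k\<le>m. A (s k) (s k) ^ (r k - 1))"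
  using mn
proof (induction m)
  case 0
  have "(\<Prod>t<r 0 - 1. A (wpath s r n t) (wpath s r n (Suc t))) = (\<Prod>t<r 0 - 1. A (s 0) (s 0))"
    by (intro prod.cong refl) (simp add: wpath_eq[of 0 n r _ s])
  then show ?case by simp
next
  case (Suc m)
  let ?f = "\<lambda>t. A (wpath s r n t) (wpath s r n (Suc t))"
  define b where "b = (\<Sum>j<Suc m. r j)"
  have b1: "1 \<le> b" using r Suc.prems unfolding b_def by (simp add: trans_le_add2)
  define c where "c = r (Suc m) - 1"
  have r1: "1 \<le> r (Suc m)" using r Suc.prems by simp
  have eq: "(\<Sum>j<Suc (Suc m). r j) - 1 = (b - 1) + 1 + c"
    using b1 r1 unfolding b_def c_def by simp
  have fb: "?f (b - 1) = A (s m) (s (Suc m))"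
  proof -
    have rm: "1 \<le> r m" using r Suc.prems by simp
    have "wpath s r n (b - 1) = s m" using wpath_eq[of m n r "b - 1" s] Suc.prems rm b1
      unfolding b_def by simp
    moreover have "wpath s r n b = s (Suc m)" using wpath_eq[of "Suc m" n r b s] Suc.prems r1
      unfolding b_def by simp
    ultimately show ?thesis using b1 by simp
  qed
  have fc: "(\<Prod>i<c. ?f (b - 1 + 1 + i)) = A (s (Suc m)) (s (Suc m)) ^ c"
  proof -
    have "(\<Prod>i<c. ?f (b - 1 + 1 + i)) = (\<Prod>i<c. A (s (Suc m)) (s (Suc m)))"
    proof (intro prod.cong refl)
      fix i assume "i \<in> {..<c}"
      then have i: "i < c" by simp
      have "wpath s r n (b + i) = s (Suc m)"
        using wpath_eq[of "Suc m" n r "b + i" s] Suc.prems i unfolding b_def c_def by simp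
      moreover have "wpath s r n (Suc (b + i)) = s (Suc m)"
        using wpath_eq[of "Suc m" n r "Suc (b + i)" s] Suc.prems i unfolding b_def c_def by simp
      ultimately show "?f (b - 1 + 1 + i) = A (s (Suc m)) (s (Suc m))" using b1 by simp
    qed
    then show ?thesis by simp
  qed
  have "(\<Prod>t<(\<Sum>j<Suc (Suc m). r j) - 1. ?f t) = (\<Prod>t<b - 1. ?f t) * ?f (b - 1) * (\<Prod>i<c. ?f (b - 1 + 1 + i))"
    unfolding eq by (rule prod_split3)
  also have "\<dots> = (\<Prod>k<m. A (s k) (s (Suc k))) * (\<Prod>k\<le>m. A (s k) (s k) ^ (r k - 1))
      * A (s m) (s (Suc m)) * A (s (Suc m)) (s (Suc m)) ^ c"
    using Suc.IH Suc.prems fb fc unfolding b_def by simp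
  also have "\<dots> = (\<Prod>k<Suc m. A (s k) (s (Suc k))) * (\<Prod>k\<le>Suc m. A (s k) (s k) ^ (r k - 1))"
    unfolding c_def by (simp add: ac_simps)
  finally show ?case .
qed

locale renew =
  fixes \<sigma> :: "nat \<Rightarrow> nat"
  assumes s0: "\<sigma> 0 = 0" and sS: "\<And>j. \<sigma> j < \<sigma> (Suc j)"
begin

lemma smono: "strict_mono \<sigma>"
  using sS by (simp add: strict_mono_Suc_iff)

lemma s_ge: "j \<le> \<sigma> j"
  by (induction j) (use s0 sS in \<open>auto simp: Suc_le_eq intro: le_less_trans\<close>)

lemma s_add: "a \<le> b \<Longrightarrow> \<sigma> a + (b - a) \<le> \<sigma> b"
proof (induction b)
  case 0 then show ?case by simp
next
  case (Suc b)
  show ?case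
  proof (cases "a \<le> b")
    case True then show ?thesis using Suc.IH sS[of b] by simp
  next
    case False then have "a = Suc b" using Suc.prems by simp
    then show ?thesis by simp
  qed
qed

abbreviation "L \<equiv> renewal_count \<sigma>"

lemma fin: "finite {j. \<sigma> j \<le> t}"
  by (rule finite_subset[of _ "{..t}"]) (auto intro: le_trans[OF s_ge])

lemma L1: "\<sigma> (L t) \<le> t"
proof -
  have "L t \<in> {j. \<sigma> j \<le> t}" unfolding renewal_count_def
    by (rule Max_in[OF fin]) (use s0 in \<open>auto intro!: exI[of _ 0]\<close>)
  then show ?thesis by simp
qed

lemma L2: "\<sigma> j \<le> t \<Longrightarrow> j \<le> L t"
  unfolding renewal_count_def by (rule Max_ge[OF fin]) simp

lemma L3: "t < \<sigma> (Suc (L t))"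
  using L2[of "Suc (L t)" t] by (cases "\<sigma> (Suc (L t)) \<le> t") auto

lemma L4: "L (\<sigma> j) = j"
proof -
  have "j \<le> L (\<sigma> j)" by (rule L2) simp
  moreover have "\<sigma> (L (\<sigma> j)) \<le> \<sigma> j" by (rule L1)
  then have "L (\<sigma> j) \<le> j" using smono by (simp add: strict_mono_less_eq)
  ultimately show ?thesis by simp
qed

lemma L5: "t \<le> t' \<Longrightarrow> L t \<le> L t'"
  using L1[of t] by (intro L2) simp

lemma L0: "L 0 = 0"
  using L1[of 0] s_ge[of "L 0"] by simp

lemma Ychar:
  assumes r: "\<forall>k\<le>n. 1 \<le> r k"
  shows "sojourn_path (\<lambda>t. x (L t)) s r n \<longleftrightarrow>
    (\<exists>m\<in>PiE {..n} (\<lambda>k. {1..r k}). sojourn_path x s m n \<and>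
        (\<forall>k\<le>Suc n. \<sigma> (\<Sum>j<k. m j) = (\<Sum>j<k. r j)))"
proof
  assume sp: "sojourn_path (\<lambda>t. x (L t)) s r n"
  define V where "V k = L (\<Sum>j<k. r j)" for k
  define m where "m = (\<lambda>k\<in>{..n}. V (Suc k) - V k)"
  have C1: "\<sigma> (V k) = (\<Sum>j<k. r j)" if "k \<le> Suc n" for k
  proof (cases k)
    case 0 then show ?thesis unfolding V_def using L0 s0 by simp
  next
    case (Suc k')
    then have k': "k' \<le> n" using that by simp
    define u where "u = (\<Sum>j<Suc k'. r j)"
    have rk: "1 \<le> r k'" using r k' by simp
    have a: "x (L u) \<noteq> s k'" using sp k' unfolding sojourn_path_def u_def by blast
    have "(\<Sum>j<k'. r j) \<le> u - 1 \<and> u - 1 < (\<Sum>j<Suc k'. r j)" using rk unfolding u_def by simp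
    then have b: "x (L (u - 1)) = s k'" using sp k' unfolding sojourn_path_def by blast
    have "\<sigma> (L u) = u"
    proof (rule ccontr)
      assume "\<sigma> (L u) \<noteq> u"
      then have "\<sigma> (L u) \<le> u - 1" using L1[of u] by simp
      then have "L u \<le> L (u - 1)" by (rule L2)
      moreover have "L (u - 1) \<le> L u" by (rule L5) simp
      ultimately show False using a b by simp
    qed
    then show ?thesis unfolding V_def Suc u_def by simp
  qed
  have C2: "V k < V (Suc k)" if "k \<le> n" for k
  proof -
    have "1 \<le> r k" using r that by simp
    then have "\<sigma> (V k) < \<sigma> (V (Suc k))" using C1[of k] C1[of "Suc k"] that by simp
    then show ?thesis using smono by (simp add: strict_mono_less)
  qed
  have C3: "(\<Sum>j<k. m j) = V k" if "k \<le> Suc n" for k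
    using that
  proof (induction k)
    case 0 then show ?case unfolding V_def using L0 by simp
  next
    case (Suc k)
    then have "k \<le> n" by simp
    then show ?case using Suc C2[of k] unfolding m_def by simp
  qed
  have mI: "m \<in> PiE {..n} (\<lambda>k. {1..r k})"
  proof -
    have "m k \<in> {1..r k}" if "k \<le> n" for k
    proof -
      have "\<sigma> (V k) + (V (Suc k) - V k) \<le> \<sigma> (V (Suc k))" using C2[OF that] by (intro s_add) simp
      then have "V (Suc k) - V k \<le> r k" using C1[of k] C1[of "Suc k"] that by simp
      then show ?thesis using C2[OF that] that unfolding m_def by simp
    qed
    then show ?thesis unfolding m_def by auto
  qed
  have spx: "sojourn_path x s m n" unfolding sojourn_path_def
  proof (intro allI impI conjI)
    fix k t assume k: "k \<le> n" and t: "(\<Sum>j<k. m j) \<le> t \<and> t < (\<Sum>j<Suc k. m j)"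
    then have t': "V k \<le> t" "t < V (Suc k)" using C3[of k] C3[of "Suc k"] by auto
    have "\<sigma> (V k) \<le> \<sigma> t" using t' smono by (simp add: strict_mono_less_eq)
    moreover have "\<sigma> t < \<sigma> (V (Suc k))" using t' smono by (simp add: strict_mono_less)
    ultimately have "(\<Sum>j<k. r j) \<le> \<sigma> t \<and> \<sigma> t < (\<Sum>j<Suc k. r j)" using C1[of k] C1[of "Suc k"] k by simp
    then have "x (L (\<sigma> t)) = s k" using sp k unfolding sojourn_path_def by blast
    then show "x t = s k" by (simp add: L4)
  next
    fix k assume k: "k \<le> n"
    have "x (L (\<Sum>j<Suc k. r j)) \<noteq> s k" using sp k unfolding sojourn_path_def by blast
    then show "x (\<Sum>j<Suc k. m j) \<noteq> s k" using C3[of "Suc k"] k unfolding V_def by simp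
  qed
  have "\<forall>k\<le>Suc n. \<sigma> (\<Sum>j<k. m j) = (\<Sum>j<k. r j)" using C1 C3 by simp
  then show "\<exists>m\<in>PiE {..n} (\<lambda>k. {1..r k}). sojourn_path x s m n \<and>
        (\<forall>k\<le>Suc n. \<sigma> (\<Sum>j<k. m j) = (\<Sum>j<k. r j))" using mI spx by blast
next
  assume "\<exists>m\<in>PiE {..n} (\<lambda>k. {1..r k}). sojourn_path x s m n \<and>
        (\<forall>k\<le>Suc n. \<sigma> (\<Sum>j<k. m j) = (\<Sum>j<k. r j))"
  then obtain m where spx: "sojourn_path x s m n" and eq: "\<forall>k\<le>Suc n. \<sigma> (\<Sum>j<k. m j) = (\<Sum>j<k. r j)"
    by blast
  show "sojourn_path (\<lambda>t. x (L t)) s r n" unfolding sojourn_path_def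
  proof (intro allI impI conjI)
    fix k t assume k: "k \<le> n" and t: "(\<Sum>j<k. r j) \<le> t \<and> t < (\<Sum>j<Suc k. r j)"
    have "(\<Sum>j<k. m j) \<le> L t" using eq k t by (intro L2) simp
    moreover have "L t < (\<Sum>j<Suc k. m j)"
    proof (rule ccontr)
      assume "\<not> L t < (\<Sum>j<Suc k. m j)"
      then have "\<sigma> (\<Sum>j<Suc k. m j) \<le> \<sigma> (L t)" using smono by (simp add: strict_mono_less_eq)
      then show False using L1[of t] eq k t by (metis Suc_le_mono leD le_trans)
    qed
    ultimately show "x (L t) = s k" using spx k unfolding sojourn_path_def by blast
  next
    fix k assume k: "k \<le> n"
    have "L (\<Sum>j<Suc k. r j) = (\<Sum>j<Suc k. m j)" using eq k L4 by (metis Suc_le_mono)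
    then show "x (L (\<Sum>j<Suc k. r j)) \<noteq> s k" using spx k unfolding sojourn_path_def by simp
  qed
qed

end

lemma sojourn_unique:
  assumes "sojourn_path x s m n" "sojourn_path x s m' n"
  shows "\<forall>k\<le>n. m k = m' k"
proof -
  have T: "(\<Sum>j<k. m j) = (\<Sum>j<k. m' j)" if "k \<le> Suc n" for k
    using that
  proof (induction k)
    case 0 then show ?case by simp
  next
    case (Suc k)
    then have k: "k \<le> n" and IH: "(\<Sum>j<k. m j) = (\<Sum>j<k. m' j)" by auto
    show ?case
    proof (rule ccontr)
      assume ne: "(\<Sum>j<Suc k. m j) \<noteq> (\<Sum>j<Suc k. m' j)"
      show False
      proof (cases "(\<Sum>j<Suc k. m j) < (\<Sum>j<Suc k. m' j)")
        case True
        then have "x (\<Sum>j<Suc k. m j) = s k" using assms(2) k IH unfolding sojourn_path_def by auto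
        then show False using assms(1) k unfolding sojourn_path_def by blast
      next
        case False
        then have "(\<Sum>j<Suc k. m' j) < (\<Sum>j<Suc k. m j)" using ne by simp
        then have "x (\<Sum>j<Suc k. m' j) = s k" using assms(1) k IH unfolding sojourn_path_def by auto
        then show False using assms(2) k unfolding sojourn_path_def by blast
      qed
    qed
  qed
  show ?thesis
  proof (intro allI impI)
    fix k assume "k \<le> n"
    then show "m k = m' k" using T[of k] T[of "Suc k"] by simp
  qed
qed

lemma sum_split_nat: "(a::nat) \<le> b \<Longrightarrow> (\<Sum>j<b. z j) = (\<Sum>j<a. z j) + (\<Sum>j\<in>{a..<b}. z j)"
  for z :: "nat \<Rightarrow> nat"
  by (metis atLeast0LessThan sum.atLeastLessThan_concat zero_le)

lemma telescope:
  "(\<forall>k\<le>Suc n. (\<Sum>j<(\<Sum>i<k. m i). z j) = (\<Sum>i<k. r i)) \<longleftrightarrow>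
   (\<forall>k\<le>n. (\<Sum>j\<in>{(\<Sum>i<k. m i)..<(\<Sum>i<Suc k. m i)}. z j) = r k)"
  for z :: "nat \<Rightarrow> nat"
proof
  assume h: "\<forall>k\<le>Suc n. (\<Sum>j<(\<Sum>i<k. m i). z j) = (\<Sum>i<k. r i)"
  show "\<forall>k\<le>n. (\<Sum>j\<in>{(\<Sum>i<k. m i)..<(\<Sum>i<Suc k. m i)}. z j) = r k"
  proof (intro allI impI)
    fix k assume k: "k \<le> n"
    have "(\<Sum>j<(\<Sum>i<Suc k. m i). z j) = (\<Sum>j<(\<Sum>i<k. m i). z j) + (\<Sum>j\<in>{(\<Sum>i<k. m i)..<(\<Sum>i<Suc k. m i)}. z j)"
      by (rule sum_split_nat) simp
    then show "(\<Sum>j\<in>{(\<Sum>i<k. m i)..<(\<Sum>i<Suc k. m i)}. z j) = r k"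
      using h[rule_format, of k] h[rule_format, of "Suc k"] k by simp
  qed
next
  assume h: "\<forall>k\<le>n. (\<Sum>j\<in>{(\<Sum>i<k. m i)..<(\<Sum>i<Suc k. m i)}. z j) = r k"
  show "\<forall>k\<le>Suc n. (\<Sum>j<(\<Sum>i<k. m i). z j) = (\<Sum>i<k. r i)"
  proof (intro allI impI)
    fix k assume "k \<le> Suc n"
    then show "(\<Sum>j<(\<Sum>i<k. m i). z j) = (\<Sum>i<k. r i)"
    proof (induction k)
      case 0 then show ?case by simp
    next
      case (Suc k)
      have "(\<Sum>j<(\<Sum>i<Suc k. m i). z j) = (\<Sum>j<(\<Sum>i<k. m i). z j) + (\<Sum>j\<in>{(\<Sum>i<k. m i)..<(\<Sum>i<Suc k. m i)}. z j)"
        by (rule sum_split_nat) simp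
      then show ?case using Suc h by simp
    qed
  qed
qed

lemma sum_shift_ivl: "(\<Sum>j\<in>{a..<a + c}. z j) = (\<Sum>j<c. z (a + j))"
  for z :: "nat \<Rightarrow> 'b::comm_monoid_add"
  by (induction c) (simp_all add: add.commute)

lemma sigma_sets_fin_dep:
  fixes W :: "'i \<Rightarrow> 'm \<Rightarrow> 'b::countable"
  assumes F: "finite F" and gen: "\<And>t v. t \<in> F \<Longrightarrow> W t -` {v} \<inter> \<Omega> \<in> G" and G: "G \<subseteq> Pow \<Omega>"
  shows "{\<omega>\<in>\<Omega>. Q (restrict (\<lambda>t. W t \<omega>) F)} \<in> sigma_sets \<Omega> G"
proof -
  interpret S: sigma_algebra \<Omega> "sigma_sets \<Omega> G" by (rule sigma_algebra_sigma_sets[OF G])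
  define C where "C x = \<Omega> \<inter> (\<Inter>t\<in>F. W t -` {x t} \<inter> \<Omega>)" for x
  have C: "C x \<in> sigma_sets \<Omega> G" for x
  proof -
    have "\<Omega> \<inter> (\<Inter>t\<in>F'. W t -` {x t} \<inter> \<Omega>) \<in> sigma_sets \<Omega> G" if "F' \<subseteq> F" "finite F'" for F'
      using that(2,1)
    proof (induction F' rule: finite_induct)
      case empty then show ?case using sigma_sets_top by simp
    next
      case (insert t F')
      have e: "\<Omega> \<inter> (\<Inter>t\<in>insert t F'. W t -` {x t} \<inter> \<Omega>) = (W t -` {x t} \<inter> \<Omega>) \<inter> (\<Omega> \<inter> (\<Inter>t\<in>F'. W t -` {x t} \<inter> \<Omega>))"
        by auto
      have "W t -` {x t} \<inter> \<Omega> \<in> sigma_sets \<Omega> G" using insert.prems gen by (auto intro: sigma_sets.Basic)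
      moreover have "\<Omega> \<inter> (\<Inter>t\<in>F'. W t -` {x t} \<inter> \<Omega>) \<in> sigma_sets \<Omega> G" using insert by auto
      ultimately show ?case unfolding e by (rule S.Int)
    qed
    then show ?thesis using F unfolding C_def by simp
  qed
  have eq: "{\<omega>\<in>\<Omega>. Q (restrict (\<lambda>t. W t \<omega>) F)} = (\<Union>x\<in>PiE F (\<lambda>_. UNIV) \<inter> Collect Q. C x)"
  proof (intro set_eqI iffI)
    fix \<omega> assume "\<omega> \<in> {\<omega>\<in>\<Omega>. Q (restrict (\<lambda>t. W t \<omega>) F)}"
    then show "\<omega> \<in> (\<Union>x\<in>PiE F (\<lambda>_. UNIV) \<inter> Collect Q. C x)"
      unfolding C_def by (intro UN_I[of "restrict (\<lambda>t. W t \<omega>) F"]) auto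
  next
    fix \<omega> assume "\<omega> \<in> (\<Union>x\<in>PiE F (\<lambda>_. UNIV) \<inter> Collect Q. C x)"
    then obtain x where x: "x \<in> PiE F (\<lambda>_. UNIV)" "Q x" "\<omega> \<in> C x" by blast
    have "restrict (\<lambda>t. W t \<omega>) F = x"
      by (rule PiE_ext[OF _ x(1)]) (use x(3) in \<open>auto simp: C_def split: if_split_asm\<close>)
    then show "\<omega> \<in> {\<omega>\<in>\<Omega>. Q (restrict (\<lambda>t. W t \<omega>) F)}" using x unfolding C_def by auto
  qed
  have "countable (PiE F (\<lambda>_. UNIV :: 'b set) \<inter> Collect Q)"
    by (intro countable_Int1 countable_PiE F) simp
  then show ?thesis unfolding eq by (rule S.countable_UN') (use C in blast)
qed

locale mc = prob_space M for M :: "'m measure" +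
  fixes X :: "nat \<Rightarrow> 'm \<Rightarrow> 'a::countable" and A :: "'a \<Rightarrow> 'a \<Rightarrow> real" and Z :: "nat \<Rightarrow> 'm \<Rightarrow> nat"
  assumes A0: "\<forall>i j. 0 \<le> A i j" and A1: "\<forall>i. A i i < 1"
    and dt: "dtmc M X A"
    and Zm: "\<forall>j. Z j \<in> measurable M (count_space UNIV)"
    and Zind: "indep_vars (\<lambda>_. count_space UNIV) Z UNIV"
    and Zid: "\<forall>j. distr M (count_space UNIV) (Z j) = distr M (count_space UNIV) (Z 0)"
    and Zpos: "\<forall>j. \<forall>\<omega>\<in>space M. 1 \<le> Z j \<omega>"
    and XZ: "indep_set (sigma_sets (space M) {X t -` {a} \<inter> space M | t a. True})
           (sigma_sets (space M) {Z j -` {k} \<inter> space M | j k. True})"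
begin

lemma Xsig:
  assumes "finite F" "\<And>\<omega>. \<omega> \<in> space M \<Longrightarrow> P \<omega> = Q (restrict (\<lambda>t. X t \<omega>) F)"
  shows "{\<omega>\<in>space M. P \<omega>} \<in> sigma_sets (space M) {X t -` {a} \<inter> space M | t a. True}"
proof -
  have "{\<omega>\<in>space M. P \<omega>} = {\<omega>\<in>space M. Q (restrict (\<lambda>t. X t \<omega>) F)}" using assms(2) by auto
  also have "\<dots> \<in> sigma_sets (space M) {X t -` {a} \<inter> space M | t a. True}"
    by (rule sigma_sets_fin_dep[OF assms(1)]) auto
  finally show ?thesis .
qed

lemma Zsig:
  assumes "finite F" "\<And>\<omega>. \<omega> \<in> space M \<Longrightarrow> P \<omega> = Q (restrict (\<lambda>t. Z t \<omega>) F)"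
  shows "{\<omega>\<in>space M. P \<omega>} \<in> sigma_sets (space M) {Z j -` {k} \<inter> space M | j k. True}"
proof -
  have "{\<omega>\<in>space M. P \<omega>} = {\<omega>\<in>space M. Q (restrict (\<lambda>t. Z t \<omega>) F)}" using assms(2) by auto
  also have "\<dots> \<in> sigma_sets (space M) {Z j -` {k} \<inter> space M | j k. True}"
    by (rule sigma_sets_fin_dep[OF assms(1)]) auto
  finally show ?thesis .
qed

lemma Xev:
  assumes "finite F" "\<And>\<omega>. \<omega> \<in> space M \<Longrightarrow> P \<omega> = Q (restrict (\<lambda>t. X t \<omega>) F)"
  shows "{\<omega>\<in>space M. P \<omega>} \<in> events"
  using Xsig[of F P Q, OF assms] indep_setD_ev1[OF XZ] by blast

lemma Zev:
  assumes "finite F" "\<And>\<omega>. \<omega> \<in> space M \<Longrightarrow> P \<omega> = Q (restrict (\<lambda>t. Z t \<omega>) F)"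
  shows "{\<omega>\<in>space M. P \<omega>} \<in> events"
  using Zsig[of F P Q, OF assms] indep_setD_ev2[OF XZ] by blast

lemma path_ev: "{\<omega>\<in>space M. \<forall>t\<le>N. X t \<omega> = w t} \<in> events"
  by (rule Xev[of "{..N}" _ "\<lambda>x. \<forall>t\<le>N. x t = w t"]) auto

lemma dt': "prob {\<omega>\<in>space M. \<forall>t\<le>N. X t \<omega> = w t}
   = prob {\<omega>\<in>space M. X 0 \<omega> = w 0} * (\<Prod>t<N. A (w t) (w (Suc t)))"
  using dt unfolding dtmc_def by blast

lemma part1:
  assumes r: "\<forall>k\<le>n. 1 \<le> r k"
  shows "prob {\<omega>\<in>space M. sojourn_path (\<lambda>t. X t \<omega>) s r n}
     = prob {\<omega>\<in>space M. X 0 \<omega> = s 0} * (\<Prod>k<n. jump_matrix A (s k) (s (Suc k)))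
       * (\<Prod>k\<le>n. geom_law (1 - A (s k) (s k)) (r k))"
proof (cases "\<exists>k<n. s (Suc k) = s k")
  case True
  then obtain k where k: "k < n" "s (Suc k) = s k" by blast
  have e1: "{\<omega>\<in>space M. sojourn_path (\<lambda>t. X t \<omega>) s r n} = {}"
  proof safe
    fix \<omega> assume "\<omega> \<in> space M" and sp: "sojourn_path (\<lambda>t. X t \<omega>) s r n"
    let ?u = "\<Sum>j<Suc k. r j"
    have "X ?u \<omega> \<noteq> s k" using sp k unfolding sojourn_path_def by auto
    moreover have "1 \<le> r (Suc k)" using r k by simp
    then have "?u < (\<Sum>j<Suc (Suc k). r j)" by simp
    moreover have "Suc k \<le> n" using k by simp
    ultimately have "X ?u \<omega> = s (Suc k)" using sp unfolding sojourn_path_def by blast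
    then show "\<omega> \<in> {}" using k \<open>X ?u \<omega> \<noteq> s k\<close> by simp
  qed
  have e2: "(\<Prod>k<n. jump_matrix A (s k) (s (Suc k))) = 0"
    using k by (intro prod_zero) (auto simp: jump_matrix_def intro!: bexI[of _ k])
  show ?thesis unfolding e1 e2 by simp
next
  case False
  then have s: "\<forall>k<n. s (Suc k) \<noteq> s k" by auto
  define N where "N = (\<Sum>j<Suc n. r j)"
  define w where "w = wpath s r n"
  have rn: "1 \<le> r n" and r0: "1 \<le> r 0" using r by auto
  have N1: "1 \<le> N" using rn unfolding N_def by simp
  have w0: "w 0 = s 0" using wpath_eq[of 0 n r 0 s] r0 unfolding w_def by simp
  have wN: "w (N - 1) = s n" using wpath_eq[of n n r "N-1" s] rn unfolding w_def N_def by simp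
  define w' where "w' = w(N := s n)"
  let ?P1 = "{\<omega>\<in>space M. \<forall>t\<le>N-1. X t \<omega> = w t}"
  let ?P2 = "{\<omega>\<in>space M. \<forall>t\<le>N. X t \<omega> = w' t}"
  have E: "{\<omega>\<in>space M. sojourn_path (\<lambda>t. X t \<omega>) s r n} = ?P1 - ?P2"
  proof -
    have "sojourn_path (\<lambda>t. X t \<omega>) s r n \<longleftrightarrow> (\<forall>t\<le>N-1. X t \<omega> = w t) \<and> \<not> (\<forall>t\<le>N. X t \<omega> = w' t)" for \<omega>
    proof -
      have lt: "\<And>t. t < N \<longleftrightarrow> t \<le> N - 1" using N1 by arith
      have a: "(\<forall>t<N. X t \<omega> = w t) \<longleftrightarrow> (\<forall>t\<le>N-1. X t \<omega> = w t)" by (simp add: lt)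
      have b: "(\<forall>t\<le>N. X t \<omega> = w' t) \<longleftrightarrow> (\<forall>t<N. X t \<omega> = w t) \<and> X N \<omega> = s n"
        unfolding w'_def by (metis fun_upd_apply le_less nat_less_le)
      show ?thesis using sojourn_iff_w[OF r s, of "\<lambda>t. X t \<omega>"] a b unfolding N_def w_def by auto
    qed
    then show ?thesis by auto
  qed
  have sub: "?P2 \<subseteq> ?P1"
  proof
    fix \<omega> assume h: "\<omega> \<in> ?P2"
    have "X t \<omega> = w t" if "t \<le> N - 1" for t
    proof -
      have "t \<le> N" "t \<noteq> N" using that N1 by auto
      then show ?thesis using h unfolding w'_def by auto
    qed
    then show "\<omega> \<in> ?P1" using h by auto
  qed
  define c where "c = prob {\<omega>\<in>space M. X 0 \<omega> = s 0}"
  define Pw where "Pw = (\<Prod>t<N-1. A (w t) (w (Suc t)))"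
  have p1: "prob ?P1 = c * Pw" unfolding c_def Pw_def using dt'[of "N-1" w] w0 by simp
  have "(\<Prod>t<N. A (w' t) (w' (Suc t))) = (\<Prod>t<Suc (N-1). A (w' t) (w' (Suc t)))" using N1 by simp
  also have "\<dots> = Pw * A (s n) (s n)"
    unfolding prod.lessThan_Suc Pw_def using N1 wN
    by (intro arg_cong2[where f="(*)"] prod.cong) (auto simp: w'_def)
  finally have p2: "prob ?P2 = c * Pw * A (s n) (s n)" unfolding c_def using dt'[of N w'] N1 w0
    by (simp add: w'_def)
  have LHS: "prob {\<omega>\<in>space M. sojourn_path (\<lambda>t. X t \<omega>) s r n} = c * Pw * (1 - A (s n) (s n))"
    unfolding E using finite_measure_Diff[OF path_ev path_ev sub] p1 p2 by (simp add: algebra_simps)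
  have Pw: "Pw = (\<Prod>k<n. A (s k) (s (Suc k))) * (\<Prod>k\<le>n. A (s k) (s k) ^ (r k - 1))"
    unfolding Pw_def N_def w_def by (rule prod_w[OF r]) simp
  define a where "a k = A (s k) (s (Suc k))" for k
  define p where "p k = 1 - A (s k) (s k)" for k
  define q where "q k = A (s k) (s k) ^ (r k - 1)" for k
  have pnz: "p k \<noteq> 0" for k using A1 unfolding p_def by (metis less_irrefl eq_iff_diff_eq_0)
  have J: "(\<Prod>k<n. jump_matrix A (s k) (s (Suc k))) = (\<Prod>k<n. a k / p k)"
    using s unfolding jump_matrix_def a_def p_def by (intro prod.cong) auto
  have G: "(\<Prod>k\<le>n. geom_law (1 - A (s k) (s k)) (r k)) = (\<Prod>k\<le>n. p k * q k)"
    using r unfolding geom_law_def p_def q_def by (intro prod.cong) auto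
  have atm: "(\<Prod>k\<le>n. f k) = (\<Prod>k<n. f k) * f n" for f :: "nat \<Rightarrow> real"
    by (metis lessThan_Suc_atMost prod.lessThan_Suc)
  have "(\<Prod>k<n. a k / p k) * (\<Prod>k\<le>n. p k * q k) = (\<Prod>k<n. a k / p k) * (\<Prod>k<n. p k) * p n * (\<Prod>k\<le>n. q k)"
    by (simp only: prod.distrib atm[of p] mult.assoc)
  also have "(\<Prod>k<n. a k / p k) * (\<Prod>k<n. p k) = (\<Prod>k<n. a k)"
    by (simp add: prod.distrib[symmetric] pnz)
  finally have "(\<Prod>k<n. a k / p k) * (\<Prod>k\<le>n. p k * q k) = (\<Prod>k<n. a k) * (\<Prod>k\<le>n. q k) * p n" by simp
  then show ?thesis unfolding LHS J G Pw c_def using pnz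
    by (simp add: a_def q_def p_def ac_simps)
qed

end

lemma sojourn_restrict:
  assumes "\<forall>t\<le>(\<Sum>i<Suc n. m i). y t = y' t"
  shows "sojourn_path y s m n \<longleftrightarrow> sojourn_path y' s m n"
proof -
  have A: "\<forall>k\<le>n. \<forall>t. t < (\<Sum>i<Suc k. m i) \<longrightarrow> y t = y' t"
    using assms ps_mono[of "Suc k" "Suc n" m for k] by (meson Suc_le_mono le_trans less_imp_le)
  have B: "\<forall>k\<le>n. y (\<Sum>i<Suc k. m i) = y' (\<Sum>i<Suc k. m i)"
    using assms ps_mono[of "Suc k" "Suc n" m for k] by simp
  show ?thesis unfolding sojourn_path_def using A B by metis
qed

context mc
begin

lemma Zmeas: "Z j \<in> measurable M (count_space UNIV)" using Zm by blast

lemma Zlaw: "prob {\<omega>\<in>space M. Z j \<omega> = v} = prob {\<omega>\<in>space M. Z 0 \<omega> = v}"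
proof -
  have "prob {\<omega>\<in>space M. Z j \<omega> = v} = measure (distr M (count_space UNIV) (Z j)) {v}"
    by (subst measure_distr[OF Zmeas]) (auto intro!: arg_cong[where f="measure M"])
  also have "\<dots> = measure (distr M (count_space UNIV) (Z 0)) {v}" using Zid by metis
  also have "\<dots> = prob {\<omega>\<in>space M. Z 0 \<omega> = v}"
    by (subst measure_distr[OF Zmeas]) (auto intro!: arg_cong[where f="measure M"])
  finally show ?thesis .
qed

lemma Zblock_law:
  assumes m: "0 < m"
  shows "prob {\<omega>\<in>space M. (\<Sum>j<m. Z (a+j) \<omega>) = r}
    = (\<Sum>x\<in>{x\<in>PiE {..<m} (\<lambda>_. {1..r}). (\<Sum>j<m. x j) = r}. \<Prod>j<m. prob {\<omega>\<in>space M. Z 0 \<omega> = x j})"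
proof -
  define S where "S = {x\<in>PiE {..<m} (\<lambda>_. {1..r}). (\<Sum>j<m. x j) = r}"
  define C where "C x = (\<Inter>j\<in>{..<m}. Z (a+j) -` {x j} \<inter> space M)" for x
  have eq: "{\<omega>\<in>space M. (\<Sum>j<m. Z (a+j) \<omega>) = r} = (\<Union>x\<in>S. C x)"
  proof (intro set_eqI iffI)
    fix \<omega> assume h: "\<omega> \<in> {\<omega>\<in>space M. (\<Sum>j<m. Z (a+j) \<omega>) = r}"
    define x where "x = restrict (\<lambda>j. Z (a+j) \<omega>) {..<m}"
    have "x \<in> S"
    proof -
      have "Z (a+j) \<omega> \<le> r" if "j < m" for j
      proof -
        have "Z (a+j) \<omega> \<le> (\<Sum>j<m. Z (a+j) \<omega>)"
          by (rule member_le_sum) (use that in auto)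
        then show ?thesis using h by simp
      qed
      moreover have "1 \<le> Z (a+j) \<omega>" for j using Zpos h by auto
      moreover have "(\<Sum>j<m. x j) = (\<Sum>j<m. Z (a+j) \<omega>)" unfolding x_def by (rule sum.cong) auto
      ultimately show ?thesis using h unfolding S_def x_def by auto
    qed
    moreover have "\<omega> \<in> C x" using h unfolding C_def x_def by auto
    ultimately show "\<omega> \<in> (\<Union>x\<in>S. C x)" by blast
  next
    fix \<omega> assume "\<omega> \<in> (\<Union>x\<in>S. C x)"
    then obtain x where x: "x \<in> S" "\<omega> \<in> C x" by blast
    have sp: "\<omega> \<in> space M" using x(2) m unfolding C_def by (auto split: if_split_asm)
    have "(\<Sum>j<m. Z (a+j) \<omega>) = (\<Sum>j<m. x j)" using x(2) unfolding C_def by (intro sum.cong) (auto split: if_split_asm)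
    then show "\<omega> \<in> {\<omega>\<in>space M. (\<Sum>j<m. Z (a+j) \<omega>) = r}" using sp x(1) unfolding S_def by simp
  qed
  have finS: "finite S" unfolding S_def by (intro finite_subset[OF _ finite_PiE[of "{..<m}" "\<lambda>_. {1..r}"]]) auto
  have Cev: "C x \<in> events" for x
    unfolding C_def using m by (intro sets.finite_INT) (auto intro: measurable_sets[OF Zmeas])
  have disj: "disjoint_family_on C S"
  unfolding disjoint_family_on_def
  proof (intro ballI impI)
    fix x y assume xy: "x \<in> S" "y \<in> S" "x \<noteq> y"
    then obtain j where j: "j < m" "x j \<noteq> y j"
      unfolding S_def using PiE_ext[of x "{..<m}" "\<lambda>_. {1..r}" y] by auto
    show "C x \<inter> C y = {}" using j unfolding C_def by auto
  qed
  have PC: "prob (C x) = (\<Prod>j<m. prob {\<omega>\<in>space M. Z 0 \<omega> = x j})" for x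
  proof -
    let ?J = "(\<lambda>j. a + j) ` {..<m}"
    have "prob (\<Inter>i\<in>?J. Z i -` {x (i - a)} \<inter> space M) = (\<Prod>i\<in>?J. prob (Z i -` {x (i - a)} \<inter> space M))"
      by (rule indep_varsD[OF Zind]) (use m in auto)
    moreover have "(\<Inter>i\<in>?J. Z i -` {x (i - a)} \<inter> space M) = C x" unfolding C_def by auto
    moreover have "(\<Prod>i\<in>?J. prob (Z i -` {x (i - a)} \<inter> space M)) = (\<Prod>j<m. prob (Z (a+j) -` {x j} \<inter> space M))"
      by (subst prod.reindex) (auto simp: inj_on_def)
    moreover have "prob (Z (a+j) -` {x j} \<inter> space M) = prob {\<omega>\<in>space M. Z 0 \<omega> = x j}" for j
    proof -
      have "Z (a+j) -` {x j} \<inter> space M = {\<omega>\<in>space M. Z (a+j) \<omega> = x j}" by auto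
      then show ?thesis using Zlaw[of "a+j" "x j"] by simp
    qed
    ultimately show ?thesis by simp
  qed
  show ?thesis unfolding eq S_def[symmetric]
    using finite_measure_finite_Union[OF finS _ disj] Cev PC by auto
qed

lemma gshift:
  assumes "0 < m"
  shows "prob {\<omega>\<in>space M. (\<Sum>j<m. Z (a+j) \<omega>) = r} = prob {\<omega>\<in>space M. (\<Sum>j<m. Z j \<omega>) = r}"
  using Zblock_law[OF assms, of a r] Zblock_law[OF assms, of 0 r] by simp

lemma blocks:
  assumes m: "\<forall>k\<le>n. 1 \<le> m k"
  shows "prob {\<omega>\<in>space M. \<forall>k\<le>n. (\<Sum>j\<in>{(\<Sum>i<k. m i)..<(\<Sum>i<Suc k. m i)}. Z j \<omega>) = r k}
    = (\<Prod>k\<le>n. prob {\<omega>\<in>space M. (\<Sum>j<m k. Z j \<omega>) = r k})"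
proof -
  define blk where "blk k = {(\<Sum>i<k. m i)..<(\<Sum>i<Suc k. m i)}" for k
  define B where "B k = {\<omega>\<in>space M. (\<Sum>j\<in>blk k. Z j \<omega>) = r k}" for k
  define E where "E i = {Z i -` A \<inter> space M | A. A \<in> sets (count_space (UNIV::nat set))}" for i
  have ind0: "indep_sets E UNIV" using Zind unfolding indep_vars_def2 E_def by auto
  have disj: "disjoint_family_on blk {..n}"
  unfolding disjoint_family_on_def
  proof (intro ballI impI)
    fix k k' assume "k \<in> {..n}" "k' \<in> {..n}" "k \<noteq> k'"
    then consider "k < k'" | "k' < k" by linarith
    then show "blk k \<inter> blk k' = {}"
    proof cases
      case 1 then have "Suc k \<le> k'" by simp
      from ps_mono[OF this, of m] show ?thesis unfolding blk_def by auto
    next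
      case 2 then have "Suc k' \<le> k" by simp
      from ps_mono[OF this, of m] show ?thesis unfolding blk_def by auto
    qed
  qed
  have ind1: "indep_sets (\<lambda>k. sigma_sets (space M) (\<Union>i\<in>blk k. E i)) {..n}"
  proof (rule indep_sets_collect_sigma)
    show "indep_sets E (\<Union>k\<in>{..n}. blk k)" by (rule indep_sets_mono_index[OF _ ind0]) simp
    show "Int_stable (E i)" for i
      unfolding Int_stable_def E_def
    proof (safe)
      fix A B assume "A \<in> sets (count_space (UNIV::nat set))" "B \<in> sets (count_space (UNIV::nat set))"
      then show "\<exists>C. Z i -` A \<inter> space M \<inter> (Z i -` B \<inter> space M) = Z i -` C \<inter> space M \<and> C \<in> sets (count_space UNIV)"
        by (intro exI[of _ "A \<inter> B"]) auto
    qed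
  qed (fact disj)
  have Bsig: "B k \<in> sigma_sets (space M) (\<Union>i\<in>blk k. E i)" for k
  proof -
    have "{\<omega>\<in>space M. (\<lambda>x. (\<Sum>j\<in>blk k. x j) = r k) (restrict (\<lambda>t. Z t \<omega>) (blk k))} \<in> sigma_sets (space M) (\<Union>i\<in>blk k. E i)"
    proof (rule sigma_sets_fin_dep)
      show "Z t -` {v} \<inter> space M \<in> (\<Union>i\<in>blk k. E i)" if "t \<in> blk k" for t v
        unfolding E_def by (rule UN_I[OF that]) auto
    qed (auto simp: E_def blk_def)
    moreover have "{\<omega>\<in>space M. (\<lambda>x. (\<Sum>j\<in>blk k. x j) = r k) (restrict (\<lambda>t. Z t \<omega>) (blk k))} = B k"
      unfolding B_def by (auto cong: sum.cong)
    ultimately show ?thesis by simp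
  qed
  have eq: "{\<omega>\<in>space M. \<forall>k\<le>n. (\<Sum>j\<in>{(\<Sum>i<k. m i)..<(\<Sum>i<Suc k. m i)}. Z j \<omega>) = r k} = (\<Inter>k\<in>{..n}. B k)"
    unfolding B_def blk_def by auto
  have "prob (\<Inter>k\<in>{..n}. B k) = (\<Prod>k\<in>{..n}. prob (B k))"
    by (rule indep_setsD[OF ind1]) (use Bsig in auto)
  moreover have "prob (B k) = prob {\<omega>\<in>space M. (\<Sum>j<m k. Z j \<omega>) = r k}" if "k \<le> n" for k
  proof -
    have "B k = {\<omega>\<in>space M. (\<Sum>j<m k. Z ((\<Sum>i<k. m i) + j) \<omega>) = r k}"
      unfolding B_def blk_def by (simp add: sum_shift_ivl)
    moreover have "0 < m k" using m that by (simp add: Suc_le_eq)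
    ultimately show ?thesis using gshift[of "m k" "\<Sum>i<k. m i" "r k"] by simp
  qed
  ultimately show ?thesis unfolding eq by simp
qed

lemma g_zero:
  assumes "r < v"
  shows "prob {\<omega>\<in>space M. (\<Sum>j<v. Z j \<omega>) = r} = 0"
proof -
  have "(\<Sum>j<v. Z j \<omega>) \<noteq> r" if "\<omega> \<in> space M" for \<omega>
  proof -
    have "(\<Sum>j<v. (1::nat)) \<le> (\<Sum>j<v. Z j \<omega>)"
      by (rule sum_mono) (use Zpos that in auto)
    then show ?thesis using assms by simp
  qed
  then have e: "{\<omega>\<in>space M. (\<Sum>j<v. Z j \<omega>) = r} = {}" by auto
  show ?thesis unfolding e by simp
qed

lemma cgl_fin:
  "compound_geom_law M Z p r = (\<Sum>v\<in>{1..r}. geom_law p v * prob {\<omega>\<in>space M. (\<Sum>j<v. Z j \<omega>) = r})"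
proof -
  have "compound_geom_law M Z p r = (\<Sum>m<r. geom_law p (Suc m) * prob {\<omega>\<in>space M. (\<Sum>j<Suc m. Z j \<omega>) = r})"
    unfolding compound_geom_law_def
    by (rule suminf_finite) (auto simp del: sum.lessThan_Suc simp: g_zero)
  also have "\<dots> = (\<Sum>v\<in>{1..r}. geom_law p v * prob {\<omega>\<in>space M. (\<Sum>j<v. Z j \<omega>) = r})"
    by (simp add: sum.atLeast1_atMost_eq)
  finally show ?thesis .
qed

end

context mc
begin

lemma renew_Z: "\<omega> \<in> space M \<Longrightarrow> renew (\<lambda>k. \<Sum>j<k. Z j \<omega>)"
  by unfold_locales (use Zpos in \<open>auto simp: Suc_le_eq\<close>)

lemma part2:
  assumes r: "\<forall>k\<le>n. 1 \<le> r k"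
  shows "prob {\<omega>\<in>space M. sojourn_path (\<lambda>t. X (renewal_count (\<lambda>n. \<Sum>j<n. Z j \<omega>) t) \<omega>) s r n}
     = prob {\<omega>\<in>space M. X 0 \<omega> = s 0} * (\<Prod>k<n. jump_matrix A (s k) (s (Suc k)))
       * (\<Prod>k\<le>n. compound_geom_law M Z (1 - A (s k) (s k)) (r k))"
proof -
  define I where "I = PiE {..n} (\<lambda>k. {1..r k})"
  define EXs where "EXs m = {\<omega>\<in>space M. sojourn_path (\<lambda>t. X t \<omega>) s m n}" for m
  define EZs where "EZs m = {\<omega>\<in>space M. \<forall>k\<le>Suc n. (\<Sum>j<(\<Sum>i<k. m i). Z j \<omega>) = (\<Sum>i<k. r i)}" for m
  define g where "g v rr = prob {\<omega>\<in>space M. (\<Sum>j<v. Z j \<omega>) = rr}" for v rr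
  define c where "c = prob {\<omega>\<in>space M. X 0 \<omega> = s 0}"
  define H where "H = (\<Prod>k<n. jump_matrix A (s k) (s (Suc k)))"
  have finI: "finite I" unfolding I_def by (intro finite_PiE) auto
  have eq: "{\<omega>\<in>space M. sojourn_path (\<lambda>t. X (renewal_count (\<lambda>n. \<Sum>j<n. Z j \<omega>) t) \<omega>) s r n}
     = (\<Union>m\<in>I. EXs m \<inter> EZs m)"
  proof (intro set_eqI iffI)
    fix \<omega> assume h: "\<omega> \<in> {\<omega>\<in>space M. sojourn_path (\<lambda>t. X (renewal_count (\<lambda>n. \<Sum>j<n. Z j \<omega>) t) \<omega>) s r n}"
    then have sp: "\<omega> \<in> space M" by simp
    interpret R: renew "\<lambda>k. \<Sum>j<k. Z j \<omega>" by (rule renew_Z[OF sp])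
    show "\<omega> \<in> (\<Union>m\<in>I. EXs m \<inter> EZs m)"
      using h R.Ychar[OF r, of "\<lambda>t. X t \<omega>" s] sp unfolding I_def EXs_def EZs_def by auto
  next
    fix \<omega> assume h: "\<omega> \<in> (\<Union>m\<in>I. EXs m \<inter> EZs m)"
    then have sp: "\<omega> \<in> space M" unfolding EXs_def by auto
    interpret R: renew "\<lambda>k. \<Sum>j<k. Z j \<omega>" by (rule renew_Z[OF sp])
    show "\<omega> \<in> {\<omega>\<in>space M. sojourn_path (\<lambda>t. X (renewal_count (\<lambda>n. \<Sum>j<n. Z j \<omega>) t) \<omega>) s r n}"
      using h R.Ychar[OF r, of "\<lambda>t. X t \<omega>" s] sp unfolding I_def EXs_def EZs_def by auto
  qed
  have disj: "disjoint_family_on (\<lambda>m. EXs m \<inter> EZs m) I"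
    unfolding disjoint_family_on_def
  proof (intro ballI impI)
    fix m m' assume mm: "m \<in> I" "m' \<in> I" "m \<noteq> m'"
    show "(EXs m \<inter> EZs m) \<inter> (EXs m' \<inter> EZs m') = {}"
    proof (rule ccontr)
      assume "(EXs m \<inter> EZs m) \<inter> (EXs m' \<inter> EZs m') \<noteq> {}"
      then obtain \<omega> where "sojourn_path (\<lambda>t. X t \<omega>) s m n" "sojourn_path (\<lambda>t. X t \<omega>) s m' n"
        unfolding EXs_def by blast
      from sojourn_unique[OF this] have "m = m'"
        using mm(1,2) unfolding I_def by (intro PiE_ext) auto
      then show False using mm by simp
    qed
  qed
  have EXsig: "EXs m \<in> sigma_sets (space M) {X t -` {a} \<inter> space M | t a. True}" for m
    unfolding EXs_def
    by (rule Xsig[of "{..(\<Sum>i<Suc n. m i)}" _ "\<lambda>x. sojourn_path x s m n"]) (auto intro!: sojourn_restrict)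
  have EZsig: "EZs m \<in> sigma_sets (space M) {Z j -` {k} \<inter> space M | j k. True}" for m
    unfolding EZs_def
  proof (rule Zsig[of "{..<(\<Sum>i<Suc n. m i)}" _ "\<lambda>x. \<forall>k\<le>Suc n. (\<Sum>j<(\<Sum>i<k. m i). x j) = (\<Sum>i<k. r i)"])
    fix \<omega> assume "\<omega> \<in> space M"
    have "(\<Sum>j<(\<Sum>i<k. m i). Z j \<omega>) = (\<Sum>j<(\<Sum>i<k. m i). restrict (\<lambda>t. Z t \<omega>) {..<(\<Sum>i<Suc n. m i)} j)"
      if "k \<le> Suc n" for k
    proof (intro sum.cong refl)
      fix j assume "j \<in> {..<(\<Sum>i<k. m i)}"
      moreover have "(\<Sum>i<k. m i) \<le> (\<Sum>i<Suc n. m i)" using ps_mono[OF that] by simp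
      ultimately show "Z j \<omega> = restrict (\<lambda>t. Z t \<omega>) {..<(\<Sum>i<Suc n. m i)} j" by auto
    qed
    then show "(\<forall>k\<le>Suc n. (\<Sum>j<(\<Sum>i<k. m i). Z j \<omega>) = (\<Sum>i<k. r i)) =
      (\<forall>k\<le>Suc n. (\<Sum>j<(\<Sum>i<k. m i). restrict (\<lambda>t. Z t \<omega>) {..<(\<Sum>i<Suc n. m i)} j) = (\<Sum>i<k. r i))"
      by simp
  qed simp
  have EXev: "EXs m \<in> events" for m using EXsig indep_setD_ev1[OF XZ] by blast
  have EZev: "EZs m \<in> events" for m using EZsig indep_setD_ev2[OF XZ] by blast
  have PX: "prob (EXs m) = c * H * (\<Prod>k\<le>n. geom_law (1 - A (s k) (s k)) (m k))" if "m \<in> I" for m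
    unfolding EXs_def c_def H_def by (rule part1) (use that in \<open>auto simp: I_def\<close>)
  have PZ: "prob (EZs m) = (\<Prod>k\<le>n. g (m k) (r k))" if "m \<in> I" for m
  proof -
    have "EZs m = {\<omega>\<in>space M. \<forall>k\<le>n. (\<Sum>j\<in>{(\<Sum>i<k. m i)..<(\<Sum>i<Suc k. m i)}. Z j \<omega>) = r k}"
    proof -
      have "(\<forall>k\<le>Suc n. (\<Sum>j<(\<Sum>i<k. m i). Z j \<omega>) = (\<Sum>i<k. r i)) \<longleftrightarrow>
        (\<forall>k\<le>n. (\<Sum>j\<in>{(\<Sum>i<k. m i)..<(\<Sum>i<Suc k. m i)}. Z j \<omega>) = r k)" for \<omega>
        by (rule telescope)
      then show ?thesis unfolding EZs_def by simp
    qed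
    moreover have "\<forall>k\<le>n. 1 \<le> m k" using that unfolding I_def by auto
    ultimately show ?thesis unfolding g_def using blocks[of n m r] by simp
  qed
  have "prob (\<Union>m\<in>I. EXs m \<inter> EZs m) = (\<Sum>m\<in>I. prob (EXs m \<inter> EZs m))"
    by (rule finite_measure_finite_Union[OF finI _ disj]) (use EXev EZev in auto)
  also have "\<dots> = (\<Sum>m\<in>I. prob (EXs m) * prob (EZs m))"
    by (intro sum.cong refl indep_setD[OF XZ] EXsig EZsig)
  also have "\<dots> = (\<Sum>m\<in>I. c * H * (\<Prod>k\<le>n. geom_law (1 - A (s k) (s k)) (m k) * g (m k) (r k)))"
    by (intro sum.cong refl) (simp add: PX PZ prod.distrib)
  also have "\<dots> = c * H * (\<Sum>m\<in>I. \<Prod>k\<le>n. geom_law (1 - A (s k) (s k)) (m k) * g (m k) (r k))"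
    by (simp add: sum_distrib_left)
  also have "(\<Sum>m\<in>I. \<Prod>k\<le>n. geom_law (1 - A (s k) (s k)) (m k) * g (m k) (r k))
     = (\<Prod>k\<le>n. \<Sum>v\<in>{1..r k}. geom_law (1 - A (s k) (s k)) v * g v (r k))"
    unfolding I_def by (rule prod_sum_PiE[symmetric]) auto
  also have "\<dots> = (\<Prod>k\<le>n. compound_geom_law M Z (1 - A (s k) (s k)) (r k))"
    unfolding g_def by (simp add: cgl_fin)
  finally show ?thesis unfolding eq c_def H_def .
qed

lemma Ymeas: "(\<lambda>\<omega>. X (renewal_count (\<lambda>n. \<Sum>j<n. Z j \<omega>) t) \<omega>) \<in> measurable M (count_space UNIV)"
proof (rule measurable_compose_countable[where f="\<lambda>i \<omega>. X i \<omega>"])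
  show "(\<lambda>\<omega>. X i \<omega>) \<in> measurable M (count_space UNIV)" for i using dt unfolding dtmc_def by simp
  show "(\<lambda>\<omega>. renewal_count (\<lambda>n. \<Sum>j<n. Z j \<omega>) t) \<in> measurable M (count_space UNIV)"
    unfolding measurable_count_space_eq2_countable
  proof (intro conjI ballI)
    fix v :: nat
    have "{\<omega>\<in>space M. renewal_count (\<lambda>n. \<Sum>j<n. Z j \<omega>) t = v} \<in> events"
    proof (rule Zev[of "{..<t}" _ "\<lambda>x. Max {k. k \<le> t \<and> (\<Sum>j<k. x j) \<le> t} = v"])
      fix \<omega> assume sp: "\<omega> \<in> space M"
      interpret R: renew "\<lambda>k. \<Sum>j<k. Z j \<omega>" by (rule renew_Z[OF sp])
      have "{k. (\<Sum>j<k. Z j \<omega>) \<le> t} = {k. k \<le> t \<and> (\<Sum>j<k. restrict (\<lambda>t. Z t \<omega>) {..<t} j) \<le> t}"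
      proof (intro set_eqI iffI)
        fix k assume "k \<in> {k. (\<Sum>j<k. Z j \<omega>) \<le> t}"
        moreover then have "k \<le> t" using R.s_ge[of k] by simp
        moreover have "(\<Sum>j<k. restrict (\<lambda>t. Z t \<omega>) {..<t} j) = (\<Sum>j<k. Z j \<omega>)"
          using \<open>k \<le> t\<close> by (intro sum.cong) auto
        ultimately show "k \<in> {k. k \<le> t \<and> (\<Sum>j<k. restrict (\<lambda>t. Z t \<omega>) {..<t} j) \<le> t}" by simp
      next
        fix k assume h: "k \<in> {k. k \<le> t \<and> (\<Sum>j<k. restrict (\<lambda>t. Z t \<omega>) {..<t} j) \<le> t}"
        then have kt: "k \<le> t" and le: "(\<Sum>j<k. restrict (\<lambda>t. Z t \<omega>) {..<t} j) \<le> t" by auto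
        have "(\<Sum>j<k. restrict (\<lambda>t. Z t \<omega>) {..<t} j) = (\<Sum>j<k. Z j \<omega>)"
          using kt by (intro sum.cong) auto
        then show "k \<in> {k. (\<Sum>j<k. Z j \<omega>) \<le> t}" using le by simp
      qed
      then show "(renewal_count (\<lambda>n. \<Sum>j<n. Z j \<omega>) t = v) =
          (Max {k. k \<le> t \<and> (\<Sum>j<k. restrict (\<lambda>t. Z t \<omega>) {..<t} j) \<le> t} = v)"
        unfolding renewal_count_def by simp
    qed simp
    moreover have "(\<lambda>\<omega>. renewal_count (\<lambda>n. \<Sum>j<n. Z j \<omega>) t) -` {v} \<inter> space M
        = {\<omega>\<in>space M. renewal_count (\<lambda>n. \<Sum>j<n. Z j \<omega>) t = v}" by auto
    ultimately show "(\<lambda>\<omega>. renewal_count (\<lambda>n. \<Sum>j<n. Z j \<omega>) t) -` {v} \<inter> space M \<in> events" by simp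
  qed simp
qed

lemma Y0: "{\<omega>\<in>space M. X (renewal_count (\<lambda>n. \<Sum>j<n. Z j \<omega>) 0) \<omega> = v} = {\<omega>\<in>space M. X 0 \<omega> = v}"
proof -
  have "renewal_count (\<lambda>n. \<Sum>j<n. Z j \<omega>) 0 = 0" if "\<omega> \<in> space M" for \<omega>
  proof -
    interpret R: renew "\<lambda>k. \<Sum>j<k. Z j \<omega>" by (rule renew_Z[OF that])
    show ?thesis by (rule R.L0)
  qed
  then show ?thesis by auto
qed

end

context mc
begin

lemma Sev: "{\<omega>\<in>space M. (\<Sum>j<k. Z j \<omega>) = v} \<in> events"
proof (rule Zev[of "{..<k}" _ "\<lambda>x. (\<Sum>j<k. x j) = v"])
  fix \<omega> have "(\<Sum>j<k. restrict (\<lambda>t. Z t \<omega>) {..<k} j) = (\<Sum>j<k. Z j \<omega>)" by (intro sum.cong) auto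
  then show "((\<Sum>j<k. Z j \<omega>) = v) = ((\<Sum>j<k. restrict (\<lambda>t. Z t \<omega>) {..<k} j) = v)" by simp
qed simp

lemma gsum1: "(\<lambda>r. prob {\<omega>\<in>space M. (\<Sum>j<k. Z j \<omega>) = r}) sums 1"
proof -
  have "(\<lambda>r. prob {\<omega>\<in>space M. (\<Sum>j<k. Z j \<omega>) = r}) sums prob (\<Union>r. {\<omega>\<in>space M. (\<Sum>j<k. Z j \<omega>) = r})"
    by (rule finite_measure_UNION) (auto intro: Sev simp: disjoint_family_on_def)
  moreover have "(\<Union>r. {\<omega>\<in>space M. (\<Sum>j<k. Z j \<omega>) = r}) = space M" by auto
  ultimately show ?thesis by (simp add: prob_space)
qed

lemma pow_meas: "(\<lambda>\<omega>. (u::real) ^ Z j \<omega>) \<in> borel_measurable M"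
  using measurable_compose[OF Zmeas, of "\<lambda>z. u ^ z" borel] by simp

lemma pow_bound: "\<bar>u\<bar> \<le> 1 \<Longrightarrow> \<bar>(u::real) ^ z\<bar> \<le> 1"
  by (simp add: power_abs power_le_one)

lemma Zint: "\<bar>u\<bar> \<le> 1 \<Longrightarrow> integrable M (\<lambda>\<omega>. (u::real) ^ Z j \<omega>)"
  by (rule integrable_const_bound[where B=1]) (auto simp: pow_bound pow_meas)

lemma Zphi: "(\<integral>\<omega>. (u::real) ^ Z j \<omega> \<partial>M) = (\<integral>\<omega>. u ^ Z 0 \<omega> \<partial>M)"
proof -
  have "(\<integral>\<omega>. u ^ Z j \<omega> \<partial>M) = integral\<^sup>L (distr M (count_space UNIV) (Z j)) (\<lambda>z. u ^ z)"
    by (rule integral_distr[OF Zmeas, symmetric]) simp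
  also have "\<dots> = integral\<^sup>L (distr M (count_space UNIV) (Z 0)) (\<lambda>z. u ^ z)" using Zid by metis
  also have "\<dots> = (\<integral>\<omega>. u ^ Z 0 \<omega> \<partial>M)"
    by (rule integral_distr[OF Zmeas]) simp
  finally show ?thesis .
qed

lemma Spow:
  assumes u: "\<bar>u\<bar> \<le> 1"
  shows "(\<integral>\<omega>. (u::real) ^ (\<Sum>j<k. Z j \<omega>) \<partial>M) = (\<integral>\<omega>. u ^ Z 0 \<omega> \<partial>M) ^ k"
proof -
  have ind: "indep_vars (\<lambda>_. borel) (\<lambda>j \<omega>. u ^ Z j \<omega>) {..<k}"
    using indep_vars_compose2[OF indep_vars_subset[OF Zind, of "{..<k}"], of "\<lambda>_ z. u ^ z" "\<lambda>_. borel"]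
    by simp
  have "(\<integral>\<omega>. u ^ (\<Sum>j<k. Z j \<omega>) \<partial>M) = (\<integral>\<omega>. (\<Prod>j<k. u ^ Z j \<omega>) \<partial>M)"
    by (simp add: power_sum)
  also have "\<dots> = (\<Prod>j<k. \<integral>\<omega>. u ^ Z j \<omega> \<partial>M)"
    by (rule indep_vars_lebesgue_integral[OF _ ind]) (auto intro: Zint[OF u])
  also have "\<dots> = (\<Prod>j<k. \<integral>\<omega>. u ^ Z 0 \<omega> \<partial>M)" by (intro prod.cong refl) (rule Zphi)
  also have "\<dots> = (\<integral>\<omega>. u ^ Z 0 \<omega> \<partial>M) ^ k" by simp
  finally show ?thesis .
qed

lemma genfun:
  assumes u: "\<bar>u\<bar> \<le> 1"
  shows "(\<lambda>r. prob {\<omega>\<in>space M. (\<Sum>j<k. Z j \<omega>) = r} * u ^ r) sums (\<integral>\<omega>. (u::real) ^ (\<Sum>j<k. Z j \<omega>) \<partial>M)"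
proof -
  define E where "E r = {\<omega>\<in>space M. (\<Sum>j<k. Z j \<omega>) = r}" for r
  define f where "f r \<omega> = u ^ r * indicator (E r) \<omega>" for r \<omega>
  have Eev: "E r \<in> events" for r unfolding E_def by (rule Sev)
  have fint: "integrable M (f r)" for r
    unfolding f_def by (intro integrable_mult_right integrable_real_indicator Eev) (simp add: less_top[symmetric])
  have If: "integral\<^sup>L M (f r) = prob (E r) * u ^ r" for r
  proof -
    have "E r \<inter> space M = E r" unfolding E_def by auto
    then show ?thesis unfolding f_def by simp
  qed
  have Inf: "(\<integral>\<omega>. norm (f r \<omega>) \<partial>M) = prob (E r) * \<bar>u\<bar> ^ r" for r
  proof -
    have "(\<lambda>\<omega>. norm (f r \<omega>)) = (\<lambda>\<omega>. \<bar>u\<bar> ^ r * indicator (E r) \<omega>)"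
      unfolding f_def by (auto simp: abs_mult power_abs split: split_indicator)
    moreover have "E r \<inter> space M = E r" unfolding E_def by auto
    ultimately show ?thesis by simp
  qed
  have s1: "(\<lambda>r. integral\<^sup>L M (f r)) sums (\<integral>\<omega>. (\<Sum>r. f r \<omega>) \<partial>M)"
  proof (rule sums_integral)
    show "integrable M (f r)" for r by (rule fint)
    show "AE \<omega> in M. summable (\<lambda>r. norm (f r \<omega>))"
    proof (rule AE_I2)
      fix \<omega> show "summable (\<lambda>r. norm (f r \<omega>))"
        by (rule summable_finite[of "{\<Sum>j<k. Z j \<omega>}"]) (auto simp: f_def E_def)
    qed
    show "summable (\<lambda>r. \<integral>\<omega>. norm (f r \<omega>) \<partial>M)"
    proof (rule summable_comparison_test[OF _ sums_summable[OF gsum1[of k]]])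
      show "\<exists>N. \<forall>n\<ge>N. norm (\<integral>\<omega>. norm (f n \<omega>) \<partial>M) \<le> prob {\<omega>\<in>space M. (\<Sum>j<k. Z j \<omega>) = n}"
      proof (intro exI allI impI)
        fix n
        have "prob (E n) * \<bar>u\<bar> ^ n \<le> prob (E n) * 1"
          by (intro mult_left_mono) (auto simp: u power_le_one)
        then show "norm (\<integral>\<omega>. norm (f n \<omega>) \<partial>M) \<le> prob {\<omega>\<in>space M. (\<Sum>j<k. Z j \<omega>) = n}"
          unfolding Inf E_def[symmetric] by simp
      qed
    qed
  qed
  have s2: "(\<integral>\<omega>. (\<Sum>r. f r \<omega>) \<partial>M) = (\<integral>\<omega>. u ^ (\<Sum>j<k. Z j \<omega>) \<partial>M)"
  proof (rule Bochner_Integration.integral_cong[OF refl])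
    fix \<omega> assume sp: "\<omega> \<in> space M"
    have "(\<Sum>r. f r \<omega>) = (\<Sum>r\<in>{\<Sum>j<k. Z j \<omega>}. f r \<omega>)"
      by (rule suminf_finite) (auto simp: f_def E_def)
    then show "(\<Sum>r. f r \<omega>) = u ^ (\<Sum>j<k. Z j \<omega>)" using sp by (simp add: f_def E_def)
  qed
  have s3: "(\<lambda>r. integral\<^sup>L M (f r)) = (\<lambda>r. prob {\<omega>\<in>space M. (\<Sum>j<k. Z j \<omega>) = r} * u ^ r)"
    unfolding If E_def ..
  show ?thesis using s1 unfolding s2 s3 .
qed

lemma cgl_fin0:
  "compound_geom_law M Z p r = (\<Sum>m<r. geom_law p (Suc m) * prob {\<omega>\<in>space M. (\<Sum>j<Suc m. Z j \<omega>) = r})"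
  unfolding compound_geom_law_def
  by (rule suminf_finite) (auto simp del: sum.lessThan_Suc simp: g_zero)

lemma part3:
  assumes u: "\<bar>u\<bar> \<le> 1"
  shows "(\<lambda>r. compound_geom_law M Z (1 - A i i) r * u ^ r) sums
            ((1 - A i i) * integral\<^sup>L M (\<lambda>\<omega>. u ^ Z 0 \<omega>)
               / (1 - A i i * integral\<^sup>L M (\<lambda>\<omega>. u ^ Z 0 \<omega>)))"
proof -
  define q where "q = A i i"
  define p where "p = 1 - q"
  define \<phi> where "\<phi> = integral\<^sup>L M (\<lambda>\<omega>. u ^ Z 0 \<omega>)"
  define g where "g k r = prob {\<omega>\<in>space M. (\<Sum>j<k. Z j \<omega>) = r}" for k r
  have q0: "0 \<le> q" and q1: "q < 1" using A0 A1 unfolding q_def by auto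
  have p0: "0 \<le> p" using q1 unfolding p_def by simp
  have g0: "0 \<le> g k r" for k r unfolding g_def by simp
  have phi1: "\<bar>\<phi>\<bar> \<le> 1"
  proof -
    have pb: "-1 \<le> u ^ z \<and> u ^ z \<le> 1" for z using pow_bound[OF u, of z] by (auto simp: abs_le_iff)
    have "\<phi> \<le> 1" unfolding \<phi>_def
      by (rule integral_le_const[OF Zint[OF u]]) (auto intro!: AE_I2 simp: pb)
    moreover have "-1 \<le> \<phi>" unfolding \<phi>_def
      by (rule integral_ge_const[OF Zint[OF u]]) (auto intro!: AE_I2 simp: pb)
    ultimately show ?thesis by simp
  qed
  have qphi: "norm (q * \<phi>) < 1"
  proof -
    have "\<bar>q * \<phi>\<bar> = q * \<bar>\<phi>\<bar>" using q0 by (simp add: abs_mult)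
    also have "\<dots> \<le> q" using phi1 q0 by (simp add: mult_left_le)
    finally show ?thesis using q1 by simp
  qed
  define a where "a x = (case x of (m, r) \<Rightarrow> p * q ^ m * g (Suc m) r * u ^ r)" for x :: "nat \<times> nat"
  define b where "b x = (case x of (m, r) \<Rightarrow> p * q ^ m * g (Suc m) r)" for x :: "nat \<times> nat"
  have rows_b: "((\<lambda>r. b (m, r)) has_sum p * q ^ m) UNIV" for m
  proof -
    have "(\<lambda>r. p * q ^ m * g (Suc m) r) sums (p * q ^ m * 1)"
      unfolding g_def by (rule sums_mult[OF gsum1])
    then show ?thesis unfolding b_def
      by (intro sums_nonneg_imp_has_sum) (auto intro!: mult_nonneg_nonneg p0 q0 g0 zero_le_power)
  qed
  have geo_s: "(\<lambda>m. p * q ^ m) summable_on UNIV"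
    by (rule summable_nonneg_imp_summable_on) (use q0 q1 p0 in \<open>auto intro!: summable_mult summable_geometric mult_nonneg_nonneg zero_le_power\<close>)
  have bnn: "0 \<le> b x" for x
  proof -
    obtain m r where x: "x = (m, r)" by (cases x)
    have "0 \<le> p * q ^ m * g (Suc m) r" using p0 q0 g0 by simp
    then show ?thesis unfolding x b_def by simp
  qed
  have b_sum: "b summable_on (UNIV \<times> UNIV)"
    by (rule summable_on_SigmaI[OF rows_b geo_s]) (rule bnn)
  have a_abs: "(\<lambda>x. norm (a x)) summable_on (UNIV \<times> UNIV)"
  proof (rule Infinite_Sum.abs_summable_on_comparison_test'[OF b_sum])
    fix x :: "nat \<times> nat"
    obtain m r where x: "x = (m, r)" by (cases x)
    have "\<bar>p * q ^ m * g (Suc m) r\<bar> * \<bar>u ^ r\<bar> \<le> \<bar>p * q ^ m * g (Suc m) r\<bar> * 1"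
      by (intro mult_left_mono pow_bound[OF u]) simp
    then show "norm (a x) \<le> b x" unfolding x a_def b_def using p0 q0 g0
      by (simp add: abs_mult)
  qed
  have a_sum: "a summable_on (UNIV \<times> UNIV)" by (rule Infinite_Sum.abs_summable_summable[OF a_abs])
  then obtain S where aS: "(a has_sum S) (UNIV \<times> UNIV)" unfolding summable_on_def by blast
  have rows_a: "((\<lambda>r. a (m, r)) has_sum p * q ^ m * \<phi> ^ Suc m) UNIV" for m
  proof (rule norm_summable_imp_has_sum)
    have "summable (\<lambda>r. p * q ^ m * g (Suc m) r)"
      unfolding g_def by (rule summable_mult[OF sums_summable[OF gsum1]])
    then show "summable (\<lambda>r. norm (a (m, r)))"
    proof (rule summable_comparison_test[rotated])
      show "\<exists>N. \<forall>n\<ge>N. norm (norm (a (m, n))) \<le> p * q ^ m * g (Suc m) n"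
      proof (intro exI allI impI)
        fix n
        have "\<bar>p * q ^ m * g (Suc m) n\<bar> * \<bar>u ^ n\<bar> \<le> \<bar>p * q ^ m * g (Suc m) n\<bar> * 1"
          by (intro mult_left_mono pow_bound[OF u]) simp
        then show "norm (norm (a (m, n))) \<le> p * q ^ m * g (Suc m) n"
          unfolding a_def using p0 q0 g0 by (simp add: abs_mult)
      qed
    qed
    have e: "(\<integral>\<omega>. u ^ (\<Sum>j<Suc m. Z j \<omega>) \<partial>M) = \<phi> ^ Suc m" unfolding \<phi>_def by (rule Spow[OF u])
    have "(\<lambda>r. p * q ^ m * (g (Suc m) r * u ^ r)) sums (p * q ^ m * \<phi> ^ Suc m)"
      using sums_mult[OF genfun[OF u, of "Suc m"], of "p * q ^ m"] by (simp only: e g_def)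
    then show "(\<lambda>r. a (m, r)) sums (p * q ^ m * \<phi> ^ Suc m)" unfolding a_def by (simp add: ac_simps)
  qed
  have geo: "(\<lambda>m. p * q ^ m * \<phi> ^ Suc m) sums (p * \<phi> / (1 - q * \<phi>))"
  proof -
    have "(\<lambda>m. (p * \<phi>) * (q * \<phi>) ^ m) sums ((p * \<phi>) * (1 / (1 - q * \<phi>)))"
      by (rule sums_mult[OF geometric_sums[OF qphi]])
    then show ?thesis by (simp add: power_mult_distrib ac_simps)
  qed
  have "((\<lambda>m. p * q ^ m * \<phi> ^ Suc m) has_sum S) UNIV"
    by (rule has_sum_SigmaD[OF aS[unfolded Sigma_def[symmetric]]]) (use rows_a in auto)
  then have SV: "S = p * \<phi> / (1 - q * \<phi>)"
    using geo has_sum_imp_sums sums_unique2 by blast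
  have swap: "((\<lambda>(x, y). a (y, x)) has_sum S) (UNIV \<times> UNIV)" using aS has_sum_swap by blast
  have cols: "((\<lambda>m. a (m, r)) has_sum compound_geom_law M Z p r * u ^ r) UNIV" for r
  proof -
    have c0: "compound_geom_law M Z p r = (\<Sum>m<r. p * q ^ m * g (Suc m) r)"
      unfolding cgl_fin0 g_def by (intro sum.cong refl) (simp add: geom_law_def p_def)
    have c1: "compound_geom_law M Z p r * u ^ r = (\<Sum>m<r. a (m, r))"
      unfolding c0 a_def by (simp add: sum_distrib_right)
    have z: "a (m, r) = 0" if "m \<in> UNIV - {..<r}" for m
    proof -
      have "g (Suc m) r = 0" unfolding g_def by (rule g_zero) (use that in simp)
      then show ?thesis unfolding a_def by simp
    qed
    have "((\<lambda>m. a (m, r)) has_sum (\<Sum>m<r. a (m, r))) {..<r}" by (rule has_sum_finite) simp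
    then have "((\<lambda>m. a (m, r)) has_sum (\<Sum>m<r. a (m, r))) UNIV"
      using has_sum_cong_neutral[where S=UNIV and T="{..<r}" and f="\<lambda>m. a (m, r)" and g="\<lambda>m. a (m, r)"] z
      by blast
    then show ?thesis unfolding c1 .
  qed
  have "((\<lambda>r. compound_geom_law M Z p r * u ^ r) has_sum S) UNIV"
    by (rule has_sum_SigmaD[OF swap]) (use cols in auto)
  then have "(\<lambda>r. compound_geom_law M Z p r * u ^ r) sums S" by (rule has_sum_imp_sums)
  then have "(\<lambda>r. compound_geom_law M Z p r * u ^ r) sums (p * \<phi> / (1 - q * \<phi>))" by (simp only: SV)
  then show ?thesis by (simp only: p_def q_def \<phi>_def)
qed

end

theorem mainTheorem3:
  fixes M :: "'m measure" and X :: "nat \<Rightarrow> 'm \<Rightarrow> 'a::countable"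
    and A :: "'a \<Rightarrow> 'a \<Rightarrow> real" and Z :: "nat \<Rightarrow> 'm \<Rightarrow> nat"
  assumes "prob_space M"
    and "\<forall>i j. 0 \<le> A i j"
    and "\<forall>i. (A i has_sum 1) UNIV"
    and "\<forall>i. A i i < 1"
    and "dtmc M X A"
    and "\<forall>j. Z j \<in> measurable M (count_space UNIV)"
    and "prob_space.indep_vars M (\<lambda>_. count_space UNIV) Z UNIV"
    and "\<forall>j. distr M (count_space UNIV) (Z j) = distr M (count_space UNIV) (Z 0)"
    and "\<forall>j. \<forall>\<omega>\<in>space M. 1 \<le> Z j \<omega>"
    and "prob_space.indep_set M
           (sigma_sets (space M) {X t -` {a} \<inter> space M | t a. True})
           (sigma_sets (space M) {Z j -` {k} \<inter> space M | j k. True})"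
  shows "semi_markov_typeA M X (jump_matrix A) (\<lambda>i. geom_law (1 - A i i))
       \<and> semi_markov_typeA M
           (\<lambda>t \<omega>. X (renewal_count (\<lambda>n. \<Sum>j<n. Z j \<omega>) t) \<omega>)
           (jump_matrix A) (\<lambda>i. compound_geom_law M Z (1 - A i i))
       \<and> (\<forall>i (u::real). \<bar>u\<bar> \<le> 1 \<longrightarrow>
            (\<lambda>r. compound_geom_law M Z (1 - A i i) r * u ^ r) sums
            ((1 - A i i) * integral\<^sup>L M (\<lambda>\<omega>. u ^ Z 0 \<omega>)
               / (1 - A i i * integral\<^sup>L M (\<lambda>\<omega>. u ^ Z 0 \<omega>))))"
proof -
  have L: "mc M X A Z" unfolding mc_def mc_axioms_def using assms by auto
  interpret mc M X A Z by (rule L)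
  have P1: "semi_markov_typeA M X (jump_matrix A) (\<lambda>i. geom_law (1 - A i i))"
    unfolding semi_markov_typeA_def
  proof (intro conjI allI impI)
    show "X t \<in> measurable M (count_space UNIV)" for t using dt unfolding dtmc_def by simp
    show "prob {\<omega>\<in>space M. sojourn_path (\<lambda>t. X t \<omega>) s r n}
     = prob {\<omega>\<in>space M. X 0 \<omega> = s 0} * (\<Prod>k<n. jump_matrix A (s k) (s (Suc k)))
       * (\<Prod>k\<le>n. geom_law (1 - A (s k) (s k)) (r k))" if "\<forall>k\<le>n. 1 \<le> r k" for n s r
      by (rule part1[OF that])
  qed
  have P2: "semi_markov_typeA M
           (\<lambda>t \<omega>. X (renewal_count (\<lambda>n. \<Sum>j<n. Z j \<omega>) t) \<omega>)
           (jump_matrix A) (\<lambda>i. compound_geom_law M Z (1 - A i i))"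
    unfolding semi_markov_typeA_def
  proof (intro conjI allI impI)
    show "(\<lambda>\<omega>. X (renewal_count (\<lambda>n. \<Sum>j<n. Z j \<omega>) t) \<omega>) \<in> measurable M (count_space UNIV)" for t
      by (rule Ymeas)
    show "prob {\<omega>\<in>space M. sojourn_path (\<lambda>t. X (renewal_count (\<lambda>n. \<Sum>j<n. Z j \<omega>) t) \<omega>) s r n}
     = prob {\<omega>\<in>space M. X (renewal_count (\<lambda>n. \<Sum>j<n. Z j \<omega>) 0) \<omega> = s 0} * (\<Prod>k<n. jump_matrix A (s k) (s (Suc k)))
       * (\<Prod>k\<le>n. compound_geom_law M Z (1 - A (s k) (s k)) (r k))" if "\<forall>k\<le>n. 1 \<le> r k" for n s r
      unfolding Y0 by (rule part2[OF that])
  qed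
  have P3: "\<forall>i (u::real). \<bar>u\<bar> \<le> 1 \<longrightarrow>
            (\<lambda>r. compound_geom_law M Z (1 - A i i) r * u ^ r) sums
            ((1 - A i i) * integral\<^sup>L M (\<lambda>\<omega>. u ^ Z 0 \<omega>)
               / (1 - A i i * integral\<^sup>L M (\<lambda>\<omega>. u ^ Z 0 \<omega>)))"
    using part3 by blast
  show ?thesis using P1 P2 P3 by blast
qed

end
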